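(* Let $p,q\in[0,1]$ be rational numbers and $R\in\{\mathrm C,\mathrm S\}$. Then $\mathscr S^{p,q}_{\mathscr F_R}$ is exactly the set of all recursive temporal selection processes.
   Context: $\mathbb N_0=\{0,1,2,\dots\}$. $\mathbb S=\bigcup_{n\in\mathbb N_0}\{0,1\}^n$ is the set of finite binary sequences (situations), $\square$ the empty sequence, $|s|$ the length, $sx$ concatenation. For $r\in[0,1]$ and $f:\{0,1\}\to\mathbb R$, $E_r(f)=rf(1)+(1-r)f(0)$. A real process is a map $F:\mathbb S\to\mathbb R$, and $\Delta F(s)$ is the function $x\mapsto F(sx)-F(s)$. A test process is a non-negative real process with $F(\square)=1$. A map from $\mathbb S$ (or $\mathbb N_0$) to $\mathbb Q$ or $\{0,1\}$ is recursive if it is computable by a Turing machine. $\mathscr F_{\mathrm C}=\mathscr F_{\mathrm S}$ denotes the set of positive, rational-valued, recursive test processes. A selection process is a map $S:\mathbb S\to\{0,1\}$; it is temporal if $S(s)$ depends only on $|s|$ (written $S(n)$). For a real process $F$ and $r\in[0,1]$, $S^r_F$ is the temporal selection process with $S^r_F(n)=1$ if $E_r(\Delta F(s))>0$ for some $s\in\mathbb S$ with $|s|=n$, and $S^r_F(n)=0$ otherwise. For a set $\mathscr F$ of real processes, $\mathscr S^{p,q}_{\mathscr F}=\{S^r_F: F\in\mathscr F,\ r\in\{p,q\}\}$. *)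

theory Defs
  imports "HOL-Analysis.Analysis" "HOL-Library.Nat_Bijection"
begin

text \<open>This class coincides with the Turing-computable total functions.\<close>

inductive total_recursive :: "nat \<Rightarrow> (nat list \<Rightarrow> nat) \<Rightarrow> bool" where
  zero: "total_recursive n (\<lambda>_. 0)"
| succ: "total_recursive 1 (\<lambda>xs. Suc (hd xs))"
| proj: "i < n \<Longrightarrow> total_recursive n (\<lambda>xs. xs ! i)"
| compose: "total_recursive m f \<Longrightarrow> length gs = m \<Longrightarrow>
         (\<And>g. g \<in> set gs \<Longrightarrow> total_recursive n g) \<Longrightarrow>
         total_recursive n (\<lambda>xs. f (map (\<lambda>g. g xs) gs))"
| prim_rec: "total_recursive n f \<Longrightarrow> total_recursive (n + 2) g \<Longrightarrow>
         total_recursive (Suc n)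
           (\<lambda>xs. rec_nat (f (tl xs)) (\<lambda>y r. g (y # r # tl xs)) (hd xs))"
| mu: "total_recursive (Suc n) g \<Longrightarrow>
       (\<And>xs. length xs = n \<Longrightarrow> \<exists>y. g (y # xs) = 0) \<Longrightarrow>
       total_recursive n (\<lambda>xs. LEAST y. g (y # xs) = 0)"

definition computable :: "(nat \<Rightarrow> nat) \<Rightarrow> bool" where
  "computable h \<longleftrightarrow> (\<exists>g. total_recursive 1 g \<and> (\<forall>x. g [x] = h x))"

text \<open>Situations (finite binary sequences) are bool lists; True stands for 1,
  False for 0; s x (concatenation) is s @ [x]; the empty situation is [].\<close>

type_synonym situation = "bool list"

fun enc_sit :: "situation \<Rightarrow> nat" where
  "enc_sit [] = 0"
| "enc_sit (b # s) = 2 * enc_sit s + (if b then 2 else 1)"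

definition enc_rat :: "rat \<Rightarrow> nat" where
  "enc_rat q = prod_encode (int_encode (fst (quotient_of q)), int_encode (snd (quotient_of q)))"

definition recursive_rat_map :: "(situation \<Rightarrow> rat) \<Rightarrow> bool" where
  "recursive_rat_map G \<longleftrightarrow> (\<exists>h. computable h \<and> (\<forall>s. h (enc_sit s) = enc_rat (G s)))"

text \<open>Maps into {0,1} are modelled as bool-valued (True = 1).\<close>
definition recursive_bit_map :: "(situation \<Rightarrow> bool) \<Rightarrow> bool" where
  "recursive_bit_map S \<longleftrightarrow> (\<exists>h. computable h \<and> (\<forall>s. h (enc_sit s) = of_bool (S s)))"

definition E :: "real \<Rightarrow> (bool \<Rightarrow> real) \<Rightarrow> real" where
  "E r f = r * f True + (1 - r) * f False"

definition Delta :: "(situation \<Rightarrow> real) \<Rightarrow> situation \<Rightarrow> bool \<Rightarrow> real" where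
  "Delta F s = (\<lambda>x. F (s @ [x]) - F s)"

definition test_process :: "(situation \<Rightarrow> real) \<Rightarrow> bool" where
  "test_process F \<longleftrightarrow> (\<forall>s. 0 \<le> F s) \<and> F [] = 1"

text \<open>F_C = F_S: positive, rational-valued, recursive test processes.\<close>
definition F_C :: "(situation \<Rightarrow> real) set" where
  "F_C = {F. test_process F \<and> (\<forall>s. 0 < F s) \<and>
             (\<exists>G. recursive_rat_map G \<and> F = (\<lambda>s. real_of_rat (G s)))}"

definition temporal :: "(situation \<Rightarrow> bool) \<Rightarrow> bool" where
  "temporal S \<longleftrightarrow> (\<forall>s t. length s = length t \<longrightarrow> S s = S t)"

definition sel :: "(situation \<Rightarrow> real) \<Rightarrow> real \<Rightarrow> situation \<Rightarrow> bool" where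
  "sel F r = (\<lambda>t. \<exists>s. length s = length t \<and> E r (Delta F s) > 0)"

definition sel_set :: "rat \<Rightarrow> rat \<Rightarrow> (situation \<Rightarrow> real) set \<Rightarrow> (situation \<Rightarrow> bool) set" where
  "sel_set p q FF = {sel F (real_of_rat r) | F r. F \<in> FF \<and> r \<in> {p, q}}"

end

theory Submission
  imports Defs
begin

definition recfn :: "nat \<Rightarrow> (nat list \<Rightarrow> nat) \<Rightarrow> bool" where
  "recfn n f \<longleftrightarrow> (\<exists>g. total_recursive n g \<and> (\<forall>xs. length xs = n \<longrightarrow> g xs = f xs))"

lemma recfn_cong: "recfn n f \<Longrightarrow> (\<And>xs. length xs = n \<Longrightarrow> f xs = g xs) \<Longrightarrow> recfn n g"
  unfolding recfn_def by metis

lemma recfn_compose: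
  assumes f: "recfn m f" and len: "length gs = m" and gs: "\<And>g. g \<in> set gs \<Longrightarrow> recfn n g"
  shows "recfn n (\<lambda>xs. f (map (\<lambda>g. g xs) gs))"
proof -
  obtain f' where f': "total_recursive m f'" "\<And>xs. length xs = m \<Longrightarrow> f' xs = f xs"
    using f unfolding recfn_def by blast
  define ch where "ch = (\<lambda>g. SOME g'. total_recursive n g' \<and> (\<forall>xs. length xs = n \<longrightarrow> g' xs = g xs))"
  have ch: "total_recursive n (ch g) \<and> (\<forall>xs. length xs = n \<longrightarrow> ch g xs = g xs)" if "g \<in> set gs" for g
    unfolding ch_def
    by (rule someI_ex[where P="\<lambda>g'. total_recursive n g' \<and> (\<forall>xs. length xs = n \<longrightarrow> g' xs = g xs)"])
      (use gs[OF that] in \<open>simp add: recfn_def\<close>)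
  have tr: "total_recursive n (\<lambda>xs. f' (map (\<lambda>g. g xs) (map ch gs)))"
    by (rule total_recursive.compose[OF f'(1)]) (use len ch in auto)
  show ?thesis unfolding recfn_def
  proof (intro exI conjI allI impI, rule tr)
    fix xs :: "nat list" assume "length xs = n"
    then have "map (\<lambda>g. g xs) (map ch gs) = map (\<lambda>g. g xs) gs" using ch by auto
    then show "f' (map (\<lambda>g. g xs) (map ch gs)) = f (map (\<lambda>g. g xs) gs)"
      using f'(2) len by (simp del: map_map)
  qed
qed

lemma recfn_proj: "i < n \<Longrightarrow> recfn n (\<lambda>xs. xs ! i)"
  unfolding recfn_def using total_recursive.proj by blast

lemma recfn_succ1: "recfn 1 (\<lambda>xs. Suc (hd xs))"
  unfolding recfn_def using total_recursive.succ by blast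

lemma recfn_const: "recfn n (\<lambda>_. k)"
proof (induction k)
  case 0
  then show ?case unfolding recfn_def using total_recursive.zero by blast
next
  case (Suc k)
  have "recfn n (\<lambda>xs. (\<lambda>ys. Suc (hd ys)) (map (\<lambda>g. g xs) [\<lambda>_. k]))"
    by (rule recfn_compose[OF recfn_succ1]) (use Suc in auto)
  then show ?case by simp
qed

definition rec1 :: "(nat \<Rightarrow> nat) \<Rightarrow> bool" where
  "rec1 f \<longleftrightarrow> recfn 1 (\<lambda>xs. f (hd xs))"
definition rec2 :: "(nat \<Rightarrow> nat \<Rightarrow> nat) \<Rightarrow> bool" where
  "rec2 f \<longleftrightarrow> recfn 2 (\<lambda>xs. f (xs ! 0) (xs ! 1))"
definition rec3 :: "(nat \<Rightarrow> nat \<Rightarrow> nat \<Rightarrow> nat) \<Rightarrow> bool" where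
  "rec3 f \<longleftrightarrow> recfn 3 (\<lambda>xs. f (xs ! 0) (xs ! 1) (xs ! 2))"

lemma rec1_app: "rec1 f \<Longrightarrow> recfn n e \<Longrightarrow> recfn n (\<lambda>xs. f (e xs))"
  unfolding rec1_def using recfn_compose[of 1 "\<lambda>xs. f (hd xs)" "[e]" n] by simp

lemma rec2_app: "rec2 f \<Longrightarrow> recfn n e1 \<Longrightarrow> recfn n e2 \<Longrightarrow> recfn n (\<lambda>xs. f (e1 xs) (e2 xs))"
  unfolding rec2_def using recfn_compose[of 2 "\<lambda>xs. f (xs!0) (xs!1)" "[e1,e2]" n] by auto

lemma rec3_app: "rec3 f \<Longrightarrow> recfn n e1 \<Longrightarrow> recfn n e2 \<Longrightarrow> recfn n e3 \<Longrightarrow>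
   recfn n (\<lambda>xs. f (e1 xs) (e2 xs) (e3 xs))"
  unfolding rec3_def using recfn_compose[of 3 "\<lambda>xs. f (xs!0) (xs!1) (xs!2)" "[e1,e2,e3]" n] by auto

lemma rec1I: assumes "recfn 1 (\<lambda>xs. f (xs ! 0))" shows "rec1 f"
  unfolding rec1_def by (rule recfn_cong[OF assms]) (auto simp: length_Suc_conv)

lemma rec2I: "recfn 2 (\<lambda>xs. f (xs ! 0) (xs ! 1)) \<Longrightarrow> rec2 f"
  unfolding rec2_def .

lemma rec3I: "recfn 3 (\<lambda>xs. f (xs ! 0) (xs ! 1) (xs ! 2)) \<Longrightarrow> rec3 f"
  unfolding rec3_def .

lemma computable_rec1: "computable h \<longleftrightarrow> rec1 h"
  unfolding computable_def rec1_def recfn_def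
  by (auto simp: length_Suc_conv)

lemma rec2_primrec:
  assumes "rec1 f" "rec3 g" "\<And>x. P 0 x = f x" "\<And>y x. P (Suc y) x = g y (P y x) x"
  shows "rec2 P"
proof -
  obtain f' where f': "total_recursive 1 f'" "\<And>xs. length xs = 1 \<Longrightarrow> f' xs = f (hd xs)"
    using assms(1) unfolding rec1_def recfn_def by blast
  obtain g' where g': "total_recursive 3 g'" "\<And>xs. length xs = 3 \<Longrightarrow> g' xs = g (xs!0) (xs!1) (xs!2)"
    using assms(2) unfolding rec3_def recfn_def by blast
  have g3: "total_recursive (1+2) g'" using g'(1) by (simp add: numeral_3_eq_3)
  have tr: "total_recursive (Suc 1) (\<lambda>xs. rec_nat (f' (tl xs)) (\<lambda>y r. g' (y # r # tl xs)) (hd xs))"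
    by (rule total_recursive.prim_rec[OF f'(1) g3])
  have eq: "rec_nat (f' [x]) (\<lambda>y r. g' (y # r # [x])) y = P y x" for y x
    by (induction y) (simp_all add: f'(2) g'(2) assms(3,4))
  show ?thesis unfolding rec2_def recfn_def
    using tr eq by (intro exI[of _ "\<lambda>xs. rec_nat (f' (tl xs)) (\<lambda>y r. g' (y # r # tl xs)) (hd xs)"])
      (auto simp: numeral_2_eq_2 length_Suc_conv)
qed

lemma rec1_mu:
  assumes "rec2 g" "\<And>x. \<exists>y. g y x = 0"
  shows "rec1 (\<lambda>x. LEAST y. g y x = 0)"
proof -
  obtain g' where g': "total_recursive 2 g'" "\<And>xs. length xs = 2 \<Longrightarrow> g' xs = g (xs!0) (xs!1)"
    using assms(1) unfolding rec2_def recfn_def by blast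
  have ex: "\<exists>y. g' (y # xs) = 0" if "length xs = 1" for xs
    using that assms(2) g'(2) by (auto simp: length_Suc_conv)
  have tr: "total_recursive 1 (\<lambda>xs. LEAST y. g' (y # xs) = 0)"
    using total_recursive.mu[of 1 g'] g'(1) ex by (simp add: numeral_2_eq_2)
  show ?thesis unfolding rec1_def recfn_def
    using tr g'(2) by (intro exI[of _ "\<lambda>xs. LEAST y. g' (y # xs) = 0"]) (auto simp: length_Suc_conv)
qed

lemma rec1_Suc: "rec1 Suc"
  unfolding rec1_def by (rule recfn_succ1)

lemma R_Suc: "recfn n e \<Longrightarrow> recfn n (\<lambda>xs. Suc (e xs))"
  by (rule rec1_app[OF rec1_Suc])

lemma rec1_id: "rec1 (\<lambda>x. x)"
  by (rule rec1I) (rule recfn_proj, simp)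

lemmas recI0 = recfn_const recfn_proj R_Suc

lemma rec2_add: "rec2 (\<lambda>y x. y + x)"
  by (rule rec2_primrec[where f="\<lambda>x. x" and g="\<lambda>y r x. Suc r"])
    (auto intro!: rec1_id rec3I recI0)

lemma R_add: "recfn n e1 \<Longrightarrow> recfn n e2 \<Longrightarrow> recfn n (\<lambda>xs. e1 xs + e2 xs)"
  using rec2_app[OF rec2_add] by blast

lemmas recI1 = recI0 R_add

lemma rec2_mult: "rec2 (\<lambda>y x. y * x)"
  by (rule rec2_primrec[where f="\<lambda>x. 0" and g="\<lambda>y r x. r + x"])
    (auto intro!: rec1I rec3I recI1)

lemma R_mult: "recfn n e1 \<Longrightarrow> recfn n e2 \<Longrightarrow> recfn n (\<lambda>xs. e1 xs * e2 xs)"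
  using rec2_app[OF rec2_mult] by blast

lemmas recI2 = recI1 R_mult

lemma rec2_pred: "rec2 (\<lambda>y x. y - 1)"
  by (rule rec2_primrec[where f="\<lambda>x. 0" and g="\<lambda>y r x. y"])
    (auto intro!: rec1I rec3I recI2)

lemma R_pred: "recfn n e \<Longrightarrow> recfn n (\<lambda>xs. e xs - 1)"
  using rec2_app[OF rec2_pred, of n e "\<lambda>_. 0"] recfn_const by blast

lemma rec2_monus: "rec2 (\<lambda>y x. x - y)"
  by (rule rec2_primrec[where f="\<lambda>x. x" and g="\<lambda>y r x. r - 1"])
    (auto intro!: rec1I rec3I recI2 R_pred[simplified])

lemma R_sub: "recfn n e1 \<Longrightarrow> recfn n e2 \<Longrightarrow> recfn n (\<lambda>xs. e1 xs - e2 xs)"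
  using rec2_app[OF rec2_monus, of n e2 e1] by blast

lemmas recI3 = recI2 R_sub

lemma rec2_pow2: "rec2 (\<lambda>y x. 2 ^ y)"
  by (rule rec2_primrec[where f="\<lambda>x. 1" and g="\<lambda>y r x. 2 * r"])
    (auto intro!: rec1I rec3I recI3)

lemma R_pow2: "recfn n e \<Longrightarrow> recfn n (\<lambda>xs. 2 ^ e xs)"
  using rec2_app[OF rec2_pow2, of n e "\<lambda>_. 0"] recfn_const by blast

lemma rec2_tri: "rec2 (\<lambda>y x. triangle y)"
  by (rule rec2_primrec[where f="\<lambda>x. 0" and g="\<lambda>y r x. r + Suc y"])
    (auto intro!: rec1I rec3I recI3)

lemma R_tri: "recfn n e \<Longrightarrow> recfn n (\<lambda>xs. triangle (e xs))"
  using rec2_app[OF rec2_tri, of n e "\<lambda>_. 0"] recfn_const by blast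

lemmas recI4 = recI3 R_pow2 R_tri

definition len :: "nat \<Rightarrow> nat" where
  "len c = (LEAST y. (c + 2) - 2 ^ Suc y = 0)"

lemma rec1_len: "rec1 len"
  unfolding len_def
proof (rule rec1_mu)
  show "rec2 (\<lambda>y c. c + 2 - 2 ^ Suc y)"
    by (rule rec2I, intro recI4) simp_all
  fix x :: nat
  have "x < 2 ^ x" by (rule less_exp)
  then have "x + 2 \<le> 2 * 2 ^ x" by linarith
  then have "x + 2 - 2 ^ Suc x = 0" by simp
  then show "\<exists>y. x + 2 - 2 ^ Suc y = 0" by blast
qed

lemma R_len: "recfn n e \<Longrightarrow> recfn n (\<lambda>xs. len (e xs))"
  by (rule rec1_app[OF rec1_len])

lemma triangle_mono: "k \<le> j \<Longrightarrow> triangle k \<le> triangle j"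
  by (induction j rule: dec_induct) auto

definition dk :: "nat \<Rightarrow> nat" where
  "dk z = (LEAST k. (z + 1) - triangle (Suc k) = 0)"

definition dfst :: "nat \<Rightarrow> nat" where "dfst z = z - triangle (dk z)"
definition dsnd :: "nat \<Rightarrow> nat" where "dsnd z = dk z - dfst z"

lemma rec1_dk: "rec1 dk"
  unfolding dk_def
proof (rule rec1_mu)
  show "rec2 (\<lambda>k z. z + 1 - triangle (Suc k))"
    by (rule rec2I, intro recI4) simp_all
  fix x :: nat
  show "\<exists>y. x + 1 - triangle (Suc y) = 0" by (intro exI[of _ x]) simp
qed

lemma R_dk: "recfn n e \<Longrightarrow> recfn n (\<lambda>xs. dk (e xs))"
  by (rule rec1_app[OF rec1_dk])

lemma R_dfst: "recfn n e \<Longrightarrow> recfn n (\<lambda>xs. dfst (e xs))"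
  unfolding dfst_def by (intro recI4 R_dk)

lemma R_dsnd: "recfn n e \<Longrightarrow> recfn n (\<lambda>xs. dsnd (e xs))"
  unfolding dsnd_def by (intro recI4 R_dk R_dfst)

lemma pe: "prod_encode (m, n) = triangle (m + n) + m"
  by (simp add: prod_encode_def)

lemma dk_enc: "dk (prod_encode (m, n)) = m + n"
  unfolding dk_def pe
proof (rule Least_equality)
  show "triangle (m + n) + m + 1 - triangle (Suc (m + n)) = 0" by simp
  fix y assume "triangle (m + n) + m + 1 - triangle (Suc y) = 0"
  then have "triangle (m + n) + m + 1 \<le> triangle (Suc y)" by simp
  show "m + n \<le> y"
  proof (rule ccontr)
    assume "\<not> m + n \<le> y"
    then have "Suc y \<le> m + n" by simp
    then have "triangle (Suc y) \<le> triangle (m + n)" by (rule triangle_mono)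
    with \<open>triangle (m + n) + m + 1 \<le> triangle (Suc y)\<close> show False by simp
  qed
qed

lemma dfst_enc: "dfst (prod_encode (m, n)) = m"
  unfolding dfst_def dk_enc by (simp add: pe)

lemma dsnd_enc: "dsnd (prod_encode (m, n)) = n"
  unfolding dsnd_def dk_enc dfst_enc by simp

lemmas recI5 = recI4 R_len R_dk R_dfst R_dsnd

lemma enc_bounds: "2 ^ length s \<le> enc_sit s + 1 \<and> enc_sit s + 2 \<le> 2 ^ Suc (length s)"
  by (induction s) auto

lemma len_enc: "len (enc_sit s) = length s"
  unfolding len_def
proof (rule Least_equality)
  show "enc_sit s + 2 - 2 ^ Suc (length s) = 0" using enc_bounds[of s] by simp
  fix y assume "enc_sit s + 2 - 2 ^ Suc y = 0"
  then have "enc_sit s + 2 \<le> 2 ^ Suc y" by simp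
  show "length s \<le> y"
  proof (rule ccontr)
    assume "\<not> length s \<le> y"
    then have "Suc y \<le> length s" by simp
    then have "(2::nat) ^ Suc y \<le> 2 ^ length s" by (rule power_increasing) simp
    with enc_bounds[of s] \<open>enc_sit s + 2 \<le> 2 ^ Suc y\<close> show False by simp
  qed
qed

lemma enc_append: "enc_sit (s @ [x]) = enc_sit s + (if x then 2 else 1) * 2 ^ length s"
  by (induction s) auto

lemma enc_surj: "\<exists>s. enc_sit s = c"
proof (induction c rule: less_induct)
  case (less c)
  show ?case
  proof (cases "c = 0")
    case True
    then show ?thesis by (intro exI[of _ "[]"]) simp
  next
    case False
    show ?thesis
    proof (cases "even c")
      case True
      then obtain c' where c': "c = 2 * c' + 2" using False
      proof -
        obtain k where k: "c = 2 * k" using True by blast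
        with False have "k \<noteq> 0" by simp
        then obtain c' where "k = Suc c'" using not0_implies_Suc by blast
        with k show ?thesis using that by simp
      qed
      then obtain s where "enc_sit s = c'" using less by fastforce
      then show ?thesis using c' by (intro exI[of _ "True # s"]) simp
    next
      case odd: False
      then obtain c' where c': "c = 2 * c' + 1" using oddE by blast
      then obtain s where "enc_sit s = c'" using less by fastforce
      then show ?thesis using c' by (intro exI[of _ "False # s"]) simp
    qed
  qed
qed

lemma enc_repl: "enc_sit (replicate i False) = 2 ^ i - 1"
proof (induction i)
  case (Suc i)
  have "(1::nat) \<le> 2 ^ i" by simp
  then show ?case using Suc by (cases "(2::nat)^i") auto
qed simp

lemma rec1_from2: assumes A: "rec2 (\<lambda>y x. f y)" shows "rec1 f"
proof (rule rec1I)
  have "recfn 1 (\<lambda>xs. (\<lambda>y x. f y) (xs!0) ((\<lambda>_. 0) xs))"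
    by (rule rec2_app[OF A]) (auto intro: recfn_proj recfn_const)
  then show "recfn 1 (\<lambda>xs. f (xs ! 0))" by simp
qed

primrec cnt :: "(nat \<Rightarrow> nat) \<Rightarrow> nat \<Rightarrow> nat" where
  "cnt h 0 = 0"
| "cnt h (Suc i) = cnt h i + h (2 ^ i - 1)"

lemma rec1_cnt: assumes "rec1 h" shows "rec1 (cnt h)"
proof (rule rec1_from2)
  show "rec2 (\<lambda>y x. cnt h y)"
    by (rule rec2_primrec[where f="\<lambda>x. 0" and g="\<lambda>y r x. r + h (2 ^ y - 1)"])
      (auto intro!: rec1I rec3I recI5 rec1_app[OF assms])
qed

lemma enc_rat_nat: "enc_rat (of_nat m) = prod_encode (2 * m, 2)"
  by (simp add: enc_rat_def int_encode_def sum_encode_def)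

lemma E_const: "E r (\<lambda>x. d) = d"
  by (simp add: E_def algebra_simps)

lemma supset_part:
  assumes tS: "temporal S" and rS: "recursive_bit_map S"
  shows "\<exists>F \<in> F_C. \<forall>r. sel F r = S"
proof -
  obtain h where hc: "computable h" and hS: "\<And>s. h (enc_sit s) = of_bool (S s)"
    using rS unfolding recursive_bit_map_def by blast
  have rh: "rec1 h" using hc computable_rec1 by blast
  define G where "G = (\<lambda>s::situation. (of_nat (1 + cnt h (length s)) :: rat))"
  define F where "F = (\<lambda>s. real_of_rat (G s))"
  define H where "H = (\<lambda>c. triangle (2 * (1 + cnt h (len c)) + 2) + 2 * (1 + cnt h (len c)))"
  have "rec1 H" unfolding H_def
    by (rule rec1I) (intro recI5 rec1_app[OF rec1_cnt[OF rh]]; simp)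
  then have "computable H" using computable_rec1 by blast
  moreover have "H (enc_sit s) = enc_rat (G s)" for s
    unfolding H_def G_def len_enc enc_rat_nat pe by simp
  ultimately have "recursive_rat_map G" unfolding recursive_rat_map_def by blast
  moreover have "test_process F" unfolding test_process_def F_def G_def by simp
  moreover have "\<forall>s. 0 < F s" unfolding F_def G_def by simp
  ultimately have FC: "F \<in> F_C" unfolding F_C_def F_def by blast
  have tempS: "S s = S t" if "length s = length t" for s t
    using tS that unfolding temporal_def by blast
  have D: "Delta F s = (\<lambda>x. of_bool (S s))" for s
  proof
    fix x
    have "h (2 ^ length s - 1) = of_bool (S s)"
      using hS[of "replicate (length s) False"] tempS[of "replicate (length s) False" s]
      by (simp add: enc_repl)
    then show "Delta F s x = of_bool (S s)"
      unfolding Delta_def F_def G_def by (simp add: of_rat_add)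
  qed
  have "sel F r = S" for r
  proof
    fix t
    have "(\<exists>s. length s = length t \<and> (0::real) < of_bool (S s)) \<longleftrightarrow> S t"
    proof
      assume "\<exists>s. length s = length t \<and> (0::real) < of_bool (S s)"
      then obtain s where "length s = length t" "S s" by (auto split: if_splits)
      then show "S t" using tempS by blast
    next
      assume "S t" then show "\<exists>s. length s = length t \<and> (0::real) < of_bool (S s)" by auto
    qed
    then show "sel F r t = S t"
      unfolding sel_def D E_const by simp
  qed
  with FC show ?thesis by blast
qed

lemma key_int:
  fixes a b n n0 n1 d d0 d1 :: int
  assumes "b > 0" "d > 0" "d0 > 0" "d1 > 0"
  shows "(0::rat) < (of_int a / of_int b) * (of_int n1 / of_int d1 - of_int n / of_int d)
          + (1 - of_int a / of_int b) * (of_int n0 / of_int d0 - of_int n / of_int d)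
    \<longleftrightarrow> b * n * d1 * d0 < a * n1 * d0 * d + (b - a) * n0 * d1 * d"
proof -
  have "(of_int a / of_int b) * (of_int n1 / of_int d1 - of_int n / of_int d)
          + (1 - of_int a / of_int b) * (of_int n0 / of_int d0 - of_int n / of_int d)
        = (of_int (a * n1 * d0 * d + (b - a) * n0 * d1 * d - b * n * d1 * d0) :: rat)
          / of_int (b * d * d0 * d1)" (is "_ = ?N / ?D")
    using assms by (simp add: field_simps)
  moreover have pos: "(0::rat) < ?D" using assms by (simp only: of_int_0_less_iff) simp
  moreover have gen: "\<And>x y::rat. 0 < y \<Longrightarrow> (0 < x / y) = (0 < x)" by (simp add: zero_less_divide_iff)
  ultimately have "(0::rat) < (of_int a / of_int b) * (of_int n1 / of_int d1 - of_int n / of_int d)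
          + (1 - of_int a / of_int b) * (of_int n0 / of_int d0 - of_int n / of_int d)
     \<longleftrightarrow> 0 < a * n1 * d0 * d + (b - a) * n0 * d1 * d - b * n * d1 * d0"
    by (simp only: gen of_int_0_less_iff)
  then show ?thesis by linarith
qed

lemma nat_ineq:
  fixes a b n n0 n1 d d0 d1 :: int
  assumes "0 \<le> a" "a \<le> b" "0 \<le> n" "0 \<le> n0" "0 \<le> n1" "0 \<le> d" "0 \<le> d0" "0 \<le> d1"
  shows "nat b * (2 * nat n) * (2 * nat d1) * (2 * nat d0)
          < nat a * (2 * nat n1) * (2 * nat d0) * (2 * nat d) + (nat b - nat a) * (2 * nat n0) * (2 * nat d1) * (2 * nat d)
    \<longleftrightarrow> b * n * d1 * d0 < a * n1 * d0 * d + (b - a) * n0 * d1 * d"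
proof -
  define L where "L = nat b * (2 * nat n) * (2 * nat d1) * (2 * nat d0)"
  define R where "R = nat a * (2 * nat n1) * (2 * nat d0) * (2 * nat d) + (nat b - nat a) * (2 * nat n0) * (2 * nat d1) * (2 * nat d)"
  have ba: "int (nat b - nat a) = b - a" using assms by simp
  have "int L = 8 * (b * n * d1 * d0)" unfolding L_def using assms by (simp add: algebra_simps)
  moreover have "int R = a * (2 * n1) * (2 * d0) * (2 * d) + (b - a) * (2 * n0) * (2 * d1) * (2 * d)"
    unfolding R_def of_nat_add of_nat_mult ba using assms by simp
  then have "int R = 8 * (a * n1 * d0 * d + (b - a) * n0 * d1 * d)" by (simp add: algebra_simps)
  ultimately have "L < R \<longleftrightarrow> 8 * (b * n * d1 * d0) < 8 * (a * n1 * d0 * d + (b - a) * n0 * d1 * d)"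
    by (metis of_nat_less_iff)
  moreover have e: "\<And>X Y::int. 8 * X < 8 * Y \<longleftrightarrow> X < Y" by linarith
  ultimately have H: "L < R \<longleftrightarrow> b * n * d1 * d0 < a * n1 * d0 * d + (b - a) * n0 * d1 * d"
    by (simp only: e)
  from H show ?thesis unfolding L_def R_def .
qed

lemma int_encode_nonneg: "0 \<le> i \<Longrightarrow> int_encode i = 2 * nat i"
  by (simp add: int_encode_def sum_encode_def)

lemma less_code: "1 - (1 - (y - x)) = (of_bool (x < y) :: nat)"
  by auto

lemma eq_code: "1 - ((x - y) + (y - x)) = (of_bool (x = y) :: nat)"
  by auto

definition Nc :: "(nat \<Rightarrow> nat) \<Rightarrow> nat \<Rightarrow> nat" where "Nc h c = dfst (h c)"
definition Dc :: "(nat \<Rightarrow> nat) \<Rightarrow> nat \<Rightarrow> nat" where "Dc h c = dsnd (h c)"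

definition cmpc :: "(nat \<Rightarrow> nat) \<Rightarrow> nat \<Rightarrow> nat \<Rightarrow> nat \<Rightarrow> nat" where
  "cmpc h A B c = 1 - (1 - (
     (A * Nc h (c + 2 * 2 ^ len c) * Dc h (c + 2 ^ len c) * Dc h c
       + (B - A) * Nc h (c + 2 ^ len c) * Dc h (c + 2 * 2 ^ len c) * Dc h c)
     - B * Nc h c * Dc h (c + 2 * 2 ^ len c) * Dc h (c + 2 ^ len c)))"

definition Pc :: "(nat \<Rightarrow> nat) \<Rightarrow> nat \<Rightarrow> nat \<Rightarrow> nat \<Rightarrow> nat \<Rightarrow> nat" where
  "Pc h A B c z = (1 - ((len c - len z) + (len z - len c))) * cmpc h A B c"

definition gc :: "(nat \<Rightarrow> nat) \<Rightarrow> nat \<Rightarrow> nat \<Rightarrow> nat \<Rightarrow> nat \<Rightarrow> nat" where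
  "gc h A B c z = (1 - Pc h A B c z) * (Suc (2 * z) - c)"

definition yc :: "(nat \<Rightarrow> nat) \<Rightarrow> nat \<Rightarrow> nat \<Rightarrow> nat \<Rightarrow> nat" where
  "yc h A B z = (LEAST c. gc h A B c z = 0)"

definition Hc :: "(nat \<Rightarrow> nat) \<Rightarrow> nat \<Rightarrow> nat \<Rightarrow> nat \<Rightarrow> nat" where
  "Hc h A B z = Pc h A B (yc h A B z) z"

lemma R_Pc:
  assumes rh: "rec1 h" and e1: "recfn n e1" and e2: "recfn n e2"
  shows "recfn n (\<lambda>xs. Pc h A B (e1 xs) (e2 xs))"
  unfolding Pc_def cmpc_def Nc_def Dc_def
  by (intro recI5 rec1_app[OF rh] e1 e2)

lemma rec1_Hc: assumes rh: "rec1 h" shows "rec1 (Hc h A B)"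
proof -
  have "rec1 (yc h A B)" unfolding yc_def
  proof (rule rec1_mu)
    show "rec2 (gc h A B)" unfolding gc_def
      by (rule rec2I, intro recI5 R_Pc[OF rh]) simp_all
    fix z show "\<exists>c. gc h A B c z = 0" unfolding gc_def by (intro exI[of _ "Suc (2 * z)"]) simp
  qed
  then show ?thesis unfolding Hc_def
    by (intro rec1I R_Pc[OF rh] rec1_app[OF \<open>rec1 (yc h A B)\<close>] recI5) simp_all
qed

lemma quot_pos: assumes "0 < q" shows "0 < fst (quotient_of q) \<and> 0 < snd (quotient_of q)"
proof -
  obtain n d where nd: "quotient_of q = (n, d)" by (cases "quotient_of q")
  have d: "0 < d" using quotient_of_denom_pos[OF nd] .
  have "q = of_int n / of_int d" using quotient_of_div[OF nd] .
  with assms d have "0 < n" by (simp add: zero_less_divide_iff)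
  with d nd show ?thesis by simp
qed


lemma subset_part:
  assumes FC: "F \<in> F_C" and r0: "0 \<le> r" and r1: "r \<le> 1"
  shows "temporal (sel F (real_of_rat r)) \<and> recursive_bit_map (sel F (real_of_rat r))"
proof
  show "temporal (sel F (real_of_rat r))"
    unfolding temporal_def sel_def by simp
  obtain G where rG: "recursive_rat_map G" and FG: "F = (\<lambda>s. real_of_rat (G s))"
    and pos: "\<And>s. 0 < F s"
    using FC unfolding F_C_def by blast
  obtain h where hc: "computable h" and hG: "\<And>s. h (enc_sit s) = enc_rat (G s)"
    using rG unfolding recursive_rat_map_def by blast
  have rh: "rec1 h" using hc computable_rec1 by blast
  have Gpos: "0 < G s" for s using pos[of s] unfolding FG by simp
  obtain a b where qr: "quotient_of r = (a, b)" by (cases "quotient_of r")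
  have b0: "0 < b" using quotient_of_denom_pos[OF qr] .
  have rab: "r = of_int a / of_int b" using quotient_of_div[OF qr] .
  have a0: "0 \<le> a" using r0 b0 unfolding rab by (simp add: zero_le_divide_iff)
  have ab: "a \<le> b" using r1 b0 unfolding rab by (simp add: divide_le_eq_1)
  define A where "A = nat a"
  define B where "B = nat b"
  define nu where "nu = (\<lambda>s. fst (quotient_of (G s)))"
  define de where "de = (\<lambda>s. snd (quotient_of (G s)))"
  have nupos: "0 < nu s" and depos: "0 < de s" for s
    using quot_pos[OF Gpos[of s]] unfolding nu_def de_def by auto
  have Gnd: "G s = of_int (nu s) / of_int (de s)" for s
    unfolding nu_def de_def using quotient_of_div[of "G s"] by simp
  have Nenc: "Nc h (enc_sit s) = 2 * nat (nu s)" for s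
    unfolding Nc_def hG enc_rat_def nu_def
    using int_encode_nonneg[of "fst (quotient_of (G s))"] nupos[of s] unfolding nu_def
    by (simp add: dfst_enc)
  have Denc: "Dc h (enc_sit s) = 2 * nat (de s)" for s
    unfolding Dc_def hG enc_rat_def de_def
    using int_encode_nonneg[of "fst (quotient_of (G s))"] int_encode_nonneg[of "snd (quotient_of (G s))"]
      nupos[of s] depos[of s] unfolding nu_def de_def
    by (simp add: dsnd_enc)
  have cmp: "cmpc h A B (enc_sit s) = of_bool (0 < E (real_of_rat r) (Delta F s))" for s
  proof -
    have c0: "enc_sit s + 2 ^ len (enc_sit s) = enc_sit (s @ [False])"
      by (simp add: enc_append len_enc)
    have c1: "enc_sit s + 2 * 2 ^ len (enc_sit s) = enc_sit (s @ [True])"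
      by (simp add: enc_append len_enc)
    let ?n = "nu s" and ?d = "de s" and ?nF = "nu (s @ [False])" and ?dF = "de (s @ [False])"
      and ?nT = "nu (s @ [True])" and ?dT = "de (s @ [True])"
    note NI = nat_ineq[OF a0 ab less_imp_le[OF nupos[of s]] less_imp_le[OF nupos[of "s @ [False]"]]
       less_imp_le[OF nupos[of "s @ [True]"]] less_imp_le[OF depos[of s]]
       less_imp_le[OF depos[of "s @ [False]"]] less_imp_le[OF depos[of "s @ [True]"]]]
    have "cmpc h A B (enc_sit s) = of_bool (b * ?n * ?dT * ?dF < a * ?nT * ?dF * ?d + (b - a) * ?nF * ?dT * ?d)"
      unfolding cmpc_def c0 c1 Nenc Denc less_code A_def B_def NI ..
    also have "(b * ?n * ?dT * ?dF < a * ?nT * ?dF * ?d + (b - a) * ?nF * ?dT * ?d)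
       \<longleftrightarrow> (0::rat) < r * (G (s @ [True]) - G s) + (1 - r) * (G (s @ [False]) - G s)"
      unfolding rab Gnd using key_int[OF b0 depos[of s] depos[of "s @ [False]"] depos[of "s @ [True]"]] by simp
    also have "\<dots> \<longleftrightarrow> 0 < E (real_of_rat r) (Delta F s)"
    proof -
      have "E (real_of_rat r) (Delta F s) = real_of_rat (r * (G (s @ [True]) - G s) + (1 - r) * (G (s @ [False]) - G s))"
        unfolding E_def Delta_def FG by (simp add: of_rat_add of_rat_mult of_rat_diff)
      then show ?thesis by simp
    qed
    finally show ?thesis .
  qed
  have Pval: "Pc h A B (enc_sit s) (enc_sit t) = of_bool (length s = length t \<and> 0 < E (real_of_rat r) (Delta F s))" for s t
    unfolding Pc_def cmp len_enc eq_code by simp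
  have Hval: "Hc h A B (enc_sit t) = of_bool (sel F (real_of_rat r) t)" for t
  proof (cases "sel F (real_of_rat r) t")
    case True
    then obtain s where s: "length s = length t" "0 < E (real_of_rat r) (Delta F s)"
      unfolding sel_def by blast
    let ?z = "enc_sit t"
    have "enc_sit s \<le> 2 * ?z" using enc_bounds[of s] enc_bounds[of t] s(1) by simp
    moreover have P1: "Pc h A B (enc_sit s) ?z = 1" using Pval s by simp
    ultimately have "gc h A B (enc_sit s) ?z = 0" unfolding gc_def by simp
    then have "yc h A B ?z \<le> enc_sit s" unfolding yc_def by (rule Least_le)
    moreover have "gc h A B (yc h A B ?z) ?z = 0" unfolding yc_def
      by (rule LeastI) fact
    ultimately have "1 - Pc h A B (yc h A B ?z) ?z = 0"
      using \<open>enc_sit s \<le> 2 * ?z\<close> unfolding gc_def by simp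
    moreover obtain s' where s': "enc_sit s' = yc h A B ?z" using enc_surj by blast
    ultimately have "1 - Pc h A B (enc_sit s') ?z = 0" by simp
    then have "Pc h A B (enc_sit s') ?z = 1" unfolding Pval
      by (cases "length s' = length t \<and> 0 < E (real_of_rat r) (Delta F s')") auto
    then have "Pc h A B (yc h A B ?z) ?z = 1" using s' by simp
    then show ?thesis using True unfolding Hc_def by simp
  next
    case False
    obtain s' where s': "enc_sit s' = yc h A B (enc_sit t)" using enc_surj by blast
    have "Pc h A B (yc h A B (enc_sit t)) (enc_sit t) = 0"
      unfolding s'[symmetric] Pval using False unfolding sel_def by auto
    then show ?thesis using False unfolding Hc_def by simp
  qed
  have "computable (Hc h A B)" using rec1_Hc[OF rh] computable_rec1 by blast
  with Hval show "recursive_bit_map (sel F (real_of_rat r))"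
    unfolding recursive_bit_map_def by blast
qed


theorem proposition27:
  fixes p q :: rat
  assumes "0 \<le> p" "p \<le> 1" "0 \<le> q" "q \<le> 1"
  shows "sel_set p q F_C = {S. temporal S \<and> recursive_bit_map S}"
proof
  show "sel_set p q F_C \<subseteq> {S. temporal S \<and> recursive_bit_map S}"
  proof
    fix S assume "S \<in> sel_set p q F_C"
    then obtain F r where "S = sel F (real_of_rat r)" "F \<in> F_C" "r \<in> {p, q}"
      unfolding sel_set_def by blast
    moreover have "0 \<le> r" "r \<le> 1" using \<open>r \<in> {p, q}\<close> assms by auto
    ultimately show "S \<in> {S. temporal S \<and> recursive_bit_map S}"
      using subset_part by blast
  qed
next
  show "{S. temporal S \<and> recursive_bit_map S} \<subseteq> sel_set p q F_C"
  proof
    fix S assume "S \<in> {S. temporal S \<and> recursive_bit_map S}"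
    then obtain F where "F \<in> F_C" "\<forall>r. sel F r = S" using supset_part by blast
    then show "S \<in> sel_set p q F_C" unfolding sel_set_def by force
  qed
qed

end
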